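(* Assume the hypotheses of the concentration setting: $\rho>0$ and there exist $t_0>0$, $C_2<\infty$ such that $t\mapsto\rho(t)$ (with $\rho(0):=\rho$) is differentiable on $[0,t_0]$ with $|\rho'(t)|\le C_2$. Let $\alpha\in(0,1)$ and let $b=b_n$ be integers with $1\le b_n\le n$, $b_n\to\infty$ and $b_n\log n/n\to0$. Let $\mathcal{S}^1_{b,n},\dots,\mathcal{S}^N_{b,n}$, $N=\binom{n}{b}$, be all subsets of size $b$ of the sample $\mathcal{S}_n=\{X_1,\dots,X_n\}$ (i.i.d. from $P$), define $$L_b(t)=\frac1N\sum_{j=1}^N I\big(H(\mathcal{S}^j_{b,n},\mathcal{S}_n)>t\big),\qquad t>0,$$ and $c_b=2\inf\{t>0: L_b(t)\le\alpha\}$. Then $$\mathbb{P}\big(H(\mathcal{S}_n,\mathbb{M})>c_b\big)\le\alpha+O\Big(\big(\tfrac{b}{n}\big)^{1/4}\Big)\quad\text{as }n\to\infty.$$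
   Context: $\mathbb{M}\subset\mathbb{R}^D$ is a compact $d$-dimensional smooth submanifold with positive reach and $P$ is a probability distribution with support $\mathbb{M}$. $B(x,r)$ is the closed Euclidean ball of radius $r$ about $x$. $H(A,B)=\max\{\sup_{a\in A}\inf_{b\in B}\|a-b\|,\sup_{b\in B}\inf_{a\in A}\|a-b\|\}$ is the Hausdorff distance. For $x\in\mathbb{M}$, $t>0$: $\rho(x,t)=P(B(x,t/2))/t^d$, $\rho(t)=\inf_{x\in\mathbb{M}}\rho(x,t)$, $\rho=\lim_{t\downarrow0}\rho(t)$ (assumed to exist). $I(\cdot)$ is the indicator function. *)

theory Defs
  imports "HOL-Analysis.Analysis" "HOL-Probability.Probability"
begin

definition hausdorff_dist :: "'a::metric_space set \<Rightarrow> 'a set \<Rightarrow> real" where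
  "hausdorff_dist A B = max (SUP a\<in>A. infdist a B) (SUP b\<in>B. infdist b A)"

text \<open>C-infinity maps on an open set U: all iterated partial derivatives
  (along the standard basis) exist and are continuous on U.
  D ks is the iterated partial derivative along the directions in ks.\<close>
definition smooth_on :: "'a::euclidean_space set \<Rightarrow> ('a \<Rightarrow> 'b::euclidean_space) \<Rightarrow> bool" where
  "smooth_on U f \<longleftrightarrow> open U \<and>
     (\<exists>D :: 'a list \<Rightarrow> 'a \<Rightarrow> 'b.
        (\<forall>x\<in>U. D [] x = f x) \<and>
        (\<forall>ks\<in>lists Basis. continuous_on U (D ks)) \<and>
        (\<forall>ks\<in>lists Basis. \<forall>i\<in>Basis. \<forall>x\<in>U.
            ((\<lambda>s. D ks (x + s *\<^sub>R i)) has_vector_derivative D (i # ks) x) (at 0)))"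

definition smooth_diffeo :: "'a::euclidean_space set \<Rightarrow> 'a set \<Rightarrow> ('a \<Rightarrow> 'a) \<Rightarrow> bool" where
  "smooth_diffeo U V \<phi> \<longleftrightarrow> \<phi> ` U = V \<and> smooth_on U \<phi> \<and>
     (\<exists>\<psi>. smooth_on V \<psi> \<and> (\<forall>x\<in>U. \<psi> (\<phi> x) = x) \<and> (\<forall>y\<in>V. \<phi> (\<psi> y) = y))"

definition smooth_submanifold :: "nat \<Rightarrow> 'a::euclidean_space set \<Rightarrow> bool" where
  "smooth_submanifold d M \<longleftrightarrow>
     (\<forall>p\<in>M. \<exists>U V \<phi> L. open U \<and> p \<in> U \<and> open V \<and> smooth_diffeo U V \<phi> \<and>
        subspace L \<and> dim L = d \<and> \<phi> ` (M \<inter> U) = V \<inter> L)"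

definition positive_reach :: "'a::euclidean_space set \<Rightarrow> bool" where
  "positive_reach M \<longleftrightarrow>
     (\<exists>r>0. \<forall>x. infdist x M < r \<longrightarrow> (\<exists>!y. y \<in> M \<and> dist x y = infdist x M))"

definition support_of :: "'a::metric_space measure \<Rightarrow> 'a set" where
  "support_of P = {x. \<forall>r>0. emeasure P (ball x r) > 0}"

definition rho_pt :: "'a::metric_space measure \<Rightarrow> nat \<Rightarrow> 'a \<Rightarrow> real \<Rightarrow> real" where
  "rho_pt P d x t = measure P (cball x (t/2)) / t ^ d"

definition rho_fun :: "'a::metric_space measure \<Rightarrow> nat \<Rightarrow> 'a set \<Rightarrow> real \<Rightarrow> real" where
  "rho_fun P d M t = (INF x\<in>M. rho_pt P d x t)"

definition subsample_L :: "nat \<Rightarrow> nat \<Rightarrow> (nat \<Rightarrow> 'a::metric_space) \<Rightarrow> real \<Rightarrow> real" where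
  "subsample_L n b w t =
     (1 / real (n choose b)) *
     (\<Sum>J\<in>{J. J \<subseteq> {..<n} \<and> card J = b}.
        (if hausdorff_dist (w ` J) (w ` {..<n}) > t then 1 else 0))"

definition subsample_c :: "nat \<Rightarrow> nat \<Rightarrow> real \<Rightarrow> (nat \<Rightarrow> 'a::metric_space) \<Rightarrow> real" where
  "subsample_c n b \<alpha> w = 2 * Inf {t. t > 0 \<and> subsample_L n b w t \<le> \<alpha>}"

end

theory Submission
  imports Defs
begin



lemma P1: fixes n :: nat and c :: real assumes I: "I \<subseteq> {..<n}"
  shows "(\<Prod>i\<in>{..<n}. if i \<in> I then c else 1) = c ^ card I"
proof -
  have e: "{..<n} \<inter> {i. i \<in> I} = I" "{..<n} \<inter> I = I" using I by auto
  show ?thesis by (subst prod.If_cases) (simp_all add: e)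
qed
lemma P2: fixes n :: nat and c :: real assumes "j < n"
  shows "(\<Prod>i\<in>{..<n}. if i = j then c else 1) = c"
  using assms by simp

lemma pim_measure:
  assumes "prob_space P" "finite I" "\<And>i. i \<in> I \<Longrightarrow> A i \<in> sets P"
  shows "measure (PiM I (\<lambda>_. P)) (PiE I A) = (\<Prod>i\<in>I. measure P (A i))"
proof -
  interpret P: prob_space P by fact
  have ps: "product_sigma_finite (\<lambda>_. P)"
    unfolding product_sigma_finite_def using assms(1) by (simp add: prob_space_imp_sigma_finite)
  have "emeasure (PiM I (\<lambda>_. P)) (PiE I A) = (\<Prod>i\<in>I. emeasure P (A i))"
    using assms by (intro product_sigma_finite.emeasure_PiM[OF ps]) auto
  also have "\<dots> = (\<Prod>i\<in>I. ennreal (measure P (A i)))"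
    by (simp add: P.emeasure_eq_measure)
  also have "\<dots> = ennreal (\<Prod>i\<in>I. measure P (A i))"
    by (simp add: prod_ennreal)
  finally show ?thesis
    by (simp add: measure_def prod_nonneg)
qed

lemma space_P_UNIV: "sets P = sets borel \<Longrightarrow> space P = UNIV"
  by (metis sets_eq_imp_space_eq space_borel)
lemma space_Pn: "sets P = sets borel \<Longrightarrow> space (PiM {..<(n::nat)} (\<lambda>_. P)) = PiE {..<n} (\<lambda>_. UNIV)"
  by (simp add: space_PiM space_P_UNIV)
lemma T1:
  fixes n :: nat
  assumes Pb: "sets P = sets borel" and I: "I \<subseteq> {..<n}"
  shows "{w\<in>space (PiM {..<n} (\<lambda>_. P)). \<forall>i\<in>I. w i \<notin> B} = PiE {..<n} (\<lambda>i. if i \<in> I then -B else UNIV)"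
  unfolding space_Pn[OF Pb] 
  using I by (auto simp: PiE_def Pi_def extensional_def)
lemma ev_all_notin:
  fixes n :: nat
  assumes P: "prob_space P" and Pb: "sets P = sets borel" and I: "I \<subseteq> {..<n}" and B: "B \<in> sets borel"
  shows "{w\<in>space (PiM {..<n} (\<lambda>_. P)). \<forall>i\<in>I. w i \<notin> B} \<in> sets (PiM {..<n} (\<lambda>_. P))"
    and "measure (PiM {..<n} (\<lambda>_. P)) {w\<in>space (PiM {..<n} (\<lambda>_. P)). \<forall>i\<in>I. w i \<notin> B}
          = (1 - measure P B) ^ card I"
proof -
  interpret P: prob_space P by fact
  have eq: "{w\<in>space (PiM {..<n} (\<lambda>_. P)). \<forall>i\<in>I. w i \<notin> B} = PiE {..<n} (\<lambda>i. if i \<in> I then -B else UNIV)"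
    using T1[OF Pb I] .
  have s: "(if i \<in> I then -B else UNIV) \<in> sets P" for i
    using B Pb by auto
  show "{w\<in>space (PiM {..<n} (\<lambda>_. P)). \<forall>i\<in>I. w i \<notin> B} \<in> sets (PiM {..<n} (\<lambda>_. P))"
    unfolding eq by (rule sets_PiM_I_finite) (use s in auto)
  have c: "measure P (-B) = 1 - measure P B"
    using P.prob_compl[of B] B Pb by (simp add: space_P_UNIV Compl_eq_Diff_UNIV)
  have "measure (PiM {..<n} (\<lambda>_. P)) (PiE {..<n} (\<lambda>i. if i \<in> I then -B else UNIV))
      = (\<Prod>i\<in>{..<n}. measure P (if i \<in> I then -B else UNIV))"
    by (rule pim_measure[OF P]) (use s in auto)
  also have "\<dots> = (\<Prod>i\<in>{..<n}. if i \<in> I then 1 - measure P B else 1)"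
    by (intro prod.cong) (auto simp: c P.prob_space[unfolded space_P_UNIV[OF Pb]])
  also have "\<dots> = (1 - measure P B) ^ card I"
    by (rule P1[OF I])
  finally show "measure (PiM {..<n} (\<lambda>_. P)) {w\<in>space (PiM {..<n} (\<lambda>_. P)). \<forall>i\<in>I. w i \<notin> B}
          = (1 - measure P B) ^ card I" unfolding eq .
qed

lemma ev_one_in:
  fixes n :: nat
  assumes P: "prob_space P" and Pb: "sets P = sets borel" and j: "j < n" and B: "B \<in> sets borel"
  shows "{w\<in>space (PiM {..<n} (\<lambda>_. P)). w j \<in> B} \<in> sets (PiM {..<n} (\<lambda>_. P))"
    and "measure (PiM {..<n} (\<lambda>_. P)) {w\<in>space (PiM {..<n} (\<lambda>_. P)). w j \<in> B} = measure P B"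
proof -
  interpret P: prob_space P by fact
  have eq: "{w\<in>space (PiM {..<n} (\<lambda>_. P)). w j \<in> B} = PiE {..<n} (\<lambda>i. if i = j then B else UNIV)"
    unfolding space_Pn[OF Pb] using j by (auto simp: PiE_def Pi_def extensional_def)
  have s: "(if i = j then B else UNIV) \<in> sets P" for i
    using B Pb by auto
  show "{w\<in>space (PiM {..<n} (\<lambda>_. P)). w j \<in> B} \<in> sets (PiM {..<n} (\<lambda>_. P))"
    unfolding eq by (rule sets_PiM_I_finite) (use s in auto)
  have "measure (PiM {..<n} (\<lambda>_. P)) (PiE {..<n} (\<lambda>i. if i = j then B else UNIV))
      = (\<Prod>i\<in>{..<n}. measure P (if i = j then B else UNIV))"
    by (rule pim_measure[OF P]) (use s in auto)
  also have "\<dots> = (\<Prod>i\<in>{..<n}. if i = j then measure P B else 1)"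
    by (intro prod.cong) (auto simp: P.prob_space[unfolded space_P_UNIV[OF Pb]])
  also have "\<dots> = measure P B"
    by (rule P2[OF j])
  finally show "measure (PiM {..<n} (\<lambda>_. P)) {w\<in>space (PiM {..<n} (\<lambda>_. P)). w j \<in> B} = measure P B"
    unfolding eq .
qed

lemma meas_le:
  assumes "finite_measure M" "A \<in> sets M" "E \<subseteq> A"
  shows "measure M E \<le> measure M A"
proof (cases "E \<in> sets M")
  case True then show ?thesis using assms by (intro finite_measure.finite_measure_mono) auto
next
  case False then show ?thesis by (simp add: measure_notin_sets)
qed



lemma hd_le:
  fixes A M :: "'a::metric_space set"
  assumes "A \<noteq> {}" "A \<subseteq> M" "M \<noteq> {}" "0 \<le> r" "\<And>m. m \<in> M \<Longrightarrow> \<exists>a\<in>A. dist m a \<le> r"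
  shows "hausdorff_dist A M \<le> r"
  unfolding hausdorff_dist_def
proof (rule max.boundedI)
  show "(SUP a\<in>A. infdist a M) \<le> r"
    using assms by (intro cSUP_least) auto
  show "(SUP m\<in>M. infdist m A) \<le> r"
  proof (intro cSUP_least)
    fix m assume "m \<in> M"
    then obtain a where "a \<in> A" "dist m a \<le> r" using assms(5) by blast
    then show "infdist m A \<le> r" using infdist_le[of a A m] by linarith
  qed (use assms in auto)
qed

lemma hd_ge:
  fixes A B :: "'a::heine_borel set"
  assumes "finite A" "A \<noteq> {}" "y \<in> B" "finite B" "\<And>a. a \<in> A \<Longrightarrow> r \<le> dist y a"
  shows "r \<le> hausdorff_dist A B"
proof -
  obtain a where a: "a \<in> A" "infdist y A = dist y a"
    using infdist_attains_inf[of A y] assms(1,2) finite_imp_closed by blast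
  have "r \<le> infdist y A" using a assms(5) by simp
  also have "\<dots> \<le> (SUP b\<in>B. infdist b A)"
    using assms(3,4) by (intro cSUP_upper) auto
  also have "\<dots> \<le> hausdorff_dist A B"
    unfolding hausdorff_dist_def by simp
  finally show ?thesis .
qed

lemma subsample_L_antimono:
  assumes "t \<le> t'"
  shows "subsample_L n b w t' \<le> subsample_L n b w t"
  unfolding subsample_L_def
  by (intro mult_left_mono sum_mono) (use assms in auto)

lemma subsample_c_props:
  fixes w :: "nat \<Rightarrow> 'a::metric_space"
  assumes alpha: "0 \<le> \<alpha>"
  shows "0 \<le> subsample_c n b \<alpha> w"
    and "0 < t' \<Longrightarrow> subsample_L n b w t' > \<alpha> \<Longrightarrow> 2 * t' \<le> subsample_c n b \<alpha> w"
proof -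
  define \<J> where "\<J> = {J. J \<subseteq> {..<n} \<and> card J = b}"
  have finJ: "finite \<J>" unfolding \<J>_def by (rule finite_subset[of _ "Pow {..<n}"]) auto
  define t0 where "t0 = 1 + (\<Sum>J\<in>\<J>. \<bar>hausdorff_dist (w ` J) (w ` {..<n})\<bar>)"
  have "\<bar>hausdorff_dist (w ` J) (w ` {..<n})\<bar> \<le> (\<Sum>J\<in>\<J>. \<bar>hausdorff_dist (w ` J) (w ` {..<n})\<bar>)"
    if "J \<in> \<J>" for J
    using finJ that by (intro member_le_sum) auto
  then have lt: "hausdorff_dist (w ` J) (w ` {..<n}) < t0" if "J \<in> \<J>" for J
    using that unfolding t0_def by fastforce
  have z: "\<forall>J\<in>\<J>. (if hausdorff_dist (w ` J) (w ` {..<n}) > t0 then 1 else 0::real) = 0"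
    using lt by (auto simp: not_less intro: less_imp_le)
  have "subsample_L n b w t0 = 0"
    unfolding subsample_L_def \<J>_def[symmetric] using z by simp
  moreover have "t0 > 0" unfolding t0_def by (smt (verit) sum_nonneg abs_ge_zero)
  ultimately have ne: "t0 \<in> {t. t > 0 \<and> subsample_L n b w t \<le> \<alpha>}" using alpha by simp
  have bdd: "bdd_below {t. t > 0 \<and> subsample_L n b w t \<le> \<alpha>}"
    by (rule bdd_belowI[of _ 0]) auto
  have "0 \<le> Inf {t. t > 0 \<and> subsample_L n b w t \<le> \<alpha>}"
    using ne by (intro cInf_greatest) auto
  then show "0 \<le> subsample_c n b \<alpha> w" unfolding subsample_c_def by simp
  assume "0 < t'" "subsample_L n b w t' > \<alpha>"
  have "t' \<le> t" if "t > 0" "subsample_L n b w t \<le> \<alpha>" for t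
  proof (rule ccontr)
    assume "\<not> t' \<le> t"
    then have "subsample_L n b w t' \<le> subsample_L n b w t" by (intro subsample_L_antimono) auto
    with that \<open>subsample_L n b w t' > \<alpha>\<close> show False by linarith
  qed
  then have "t' \<le> Inf {t. t > 0 \<and> subsample_L n b w t \<le> \<alpha>}"
    using ne by (intro cInf_greatest) auto
  then show "2 * t' \<le> subsample_c n b \<alpha> w" unfolding subsample_c_def by simp
qed

lemma subsample_L_ge:
  fixes w :: "nat \<Rightarrow> 'a::metric_space"
  assumes bn: "b \<le> n"
    and G: "\<And>J. J \<subseteq> {..<n} \<Longrightarrow> card J = b \<Longrightarrow> w \<in> G J \<Longrightarrow> hausdorff_dist (w ` J) (w ` {..<n}) > t"
  shows "subsample_L n b w t \<ge> 1 - (1 / real (n choose b)) *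
           (\<Sum>J\<in>{J. J \<subseteq> {..<n} \<and> card J = b}. if w \<in> G J then 0 else 1)"
proof -
  define \<J> where "\<J> = {J. J \<subseteq> {..<n} \<and> card J = b}"
  have cJ: "card \<J> = n choose b" unfolding \<J>_def using n_subsets[of "{..<n}" b] by simp
  have pos: "real (n choose b) > 0" using bn by simp
  have "(\<Sum>J\<in>\<J>. 1 - (if w \<in> G J then 0 else 1)) \<le> (\<Sum>J\<in>\<J>. (if hausdorff_dist (w ` J) (w ` {..<n}) > t then 1 else 0 :: real))"
    by (intro sum_mono) (use G in \<open>auto simp: \<J>_def\<close>)
  then have "real (n choose b) - (\<Sum>J\<in>\<J>. (if w \<in> G J then 0 else 1)) \<le> (\<Sum>J\<in>\<J>. (if hausdorff_dist (w ` J) (w ` {..<n}) > t then 1 else 0 :: real))"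
    by (simp add: sum_subtractf cJ)
  then have "(real (n choose b) - (\<Sum>J\<in>\<J>. (if w \<in> G J then 0 else 1))) / real (n choose b) \<le> (\<Sum>J\<in>\<J>. (if hausdorff_dist (w ` J) (w ` {..<n}) > t then 1 else 0 :: real)) / real (n choose b)"
    using pos by (intro divide_right_mono) auto
  moreover have "(real (n choose b) - (\<Sum>J\<in>\<J>. (if w \<in> G J then 0 else 1))) / real (n choose b) = 1 - (1 / real (n choose b)) * (\<Sum>J\<in>\<J>. (if w \<in> G J then 0 else 1))"
    using pos by (simp add: diff_divide_distrib)
  ultimately show ?thesis
    unfolding subsample_L_def \<J>_def[symmetric] by simp
qed



lemma support_full:
  fixes M :: "'a::euclidean_space set" and P :: "'a measure"
  assumes P: "prob_space P" and Pb: "sets P = sets borel" and supp: "support_of P = M"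
    and cl: "closed M"
  shows "measure P (-M) = 0" "M \<noteq> {}"
proof -
  interpret P: prob_space P by fact
  define F where "F = {ball x r | x r. r > 0 \<and> emeasure P (ball x r) = 0}"
  have Fo: "\<And>S. S \<in> F \<Longrightarrow> open S" unfolding F_def by auto
  obtain F' where F': "F' \<subseteq> F" "countable F'" "\<Union>F' = \<Union>F"
    using Lindelof[OF Fo] by blast
  have "\<Union>((\<lambda>S. S) ` F') \<in> null_sets P"
  proof (rule null_sets_UN')
    show "countable F'" by fact
    fix S assume "S \<in> F'"
    then have "S \<in> F" using F' by auto
    then obtain x r where "S = ball x r" "emeasure P (ball x r) = 0" unfolding F_def by auto
    then show "S \<in> null_sets P" using Pb by auto
  qed
  then have nF: "\<Union>F \<in> null_sets P" using F' by simp
  have sub: "-M \<subseteq> \<Union>F"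
  proof
    fix x assume "x \<in> -M"
    then have "x \<notin> support_of P" using supp by auto
    then obtain r where "r > 0" "\<not> emeasure P (ball x r) > 0" unfolding support_of_def by auto
    then have "emeasure P (ball x r) = 0" by (simp add: not_gr_zero)
    then have "ball x r \<in> F" using \<open>r > 0\<close> unfolding F_def by blast
    then show "x \<in> \<Union>F" using \<open>r > 0\<close> by (meson UnionI centre_in_ball)
  qed
  have "-M \<in> sets P" using cl Pb by (simp add: borel_closed)
  then have "-M \<in> null_sets P" using null_sets_subset[OF nF _ sub] by blast
  then show "measure P (-M) = 0" by (simp add: P.emeasure_eq_measure null_sets_def)
  show "M \<noteq> {}"
  proof
    assume "M = {}"
    then have "UNIV \<in> null_sets P" using \<open>-M \<in> null_sets P\<close> by simp
    then show False using P.prob_space Pb by (metis P.emeasure_space_1 null_setsD1 sets_eq_imp_space_eq space_borel zero_neq_one)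
  qed
qed

lemma rho_bounds:
  fixes M :: "'a::euclidean_space set" and P :: "'a measure"
  assumes rho_lim: "(rho_fun P d M \<longlongrightarrow> \<rho>) (at_right 0)" and rho_pos: "\<rho> > 0" and Mne: "M \<noteq> {}"
  shows "\<exists>t1>0. \<forall>r. 0 < r \<longrightarrow> r < t1 \<longrightarrow>
     (\<forall>x\<in>M. (\<rho>/2) * (2*r)^d \<le> measure P (cball x r)) \<and> (\<exists>x\<in>M. measure P (cball x r) \<le> 2*\<rho>*(2*r)^d)"
proof -
  have "\<forall>\<^sub>F t in at_right 0. \<rho>/2 < rho_fun P d M t" by (rule order_tendstoD(1)[OF rho_lim]) (use rho_pos in simp)
  moreover have "\<forall>\<^sub>F t in at_right 0. rho_fun P d M t < 2*\<rho>" by (rule order_tendstoD(2)[OF rho_lim]) (use rho_pos in simp)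
  ultimately have "\<forall>\<^sub>F t in at_right 0. \<rho>/2 < rho_fun P d M t \<and> rho_fun P d M t < 2*\<rho>"
    by (rule eventually_conj)
  then have "\<exists>b>0. \<forall>t>0. t < b \<longrightarrow> \<rho>/2 < rho_fun P d M t \<and> rho_fun P d M t < 2*\<rho>"
    by (subst (asm) eventually_at_right[OF zero_less_one]) simp
  then obtain b where b: "b > 0" "\<And>t. t > 0 \<Longrightarrow> t < b \<Longrightarrow> \<rho>/2 < rho_fun P d M t \<and> rho_fun P d M t < 2*\<rho>"
    by blast
  show ?thesis
  proof (intro exI[of _ "b/2"] conjI allI impI)
    show "b/2 > 0" using b by simp
    fix r :: real assume r: "0 < r" "r < b/2"
    let ?t = "2*r"
    have h: "\<rho>/2 < rho_fun P d M ?t" "rho_fun P d M ?t < 2*\<rho>" using b(2)[of ?t] r by auto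
    have tp: "?t ^ d > 0" using r by simp
    have bdd: "bdd_below ((\<lambda>x. rho_pt P d x ?t) ` M)"
      by (rule bdd_belowI2[of _ 0]) (use tp in \<open>auto simp: rho_pt_def\<close>)
    have ct: "cball x (?t/2) = cball x r" for x :: 'a by simp
    show "\<forall>x\<in>M. (\<rho>/2) * (2*r)^d \<le> measure P (cball x r)"
    proof
      fix x assume "x \<in> M"
      then have "rho_fun P d M ?t \<le> rho_pt P d x ?t"
        unfolding rho_fun_def by (rule cINF_lower[OF bdd])
      with h have "\<rho>/2 < measure P (cball x r) / ?t^d" unfolding rho_pt_def ct by linarith
      then show "(\<rho>/2) * (2*r)^d \<le> measure P (cball x r)" using pos_less_divide_eq[OF tp] by auto
    qed
    have "\<exists>x\<in>M. rho_pt P d x ?t < 2*\<rho>"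
      using h(2) cINF_less_iff[OF Mne bdd] unfolding rho_fun_def by blast
    then obtain x where "x \<in> M" "measure P (cball x r) / ?t^d < 2*\<rho>" unfolding rho_pt_def ct by blast
    then show "\<exists>x\<in>M. measure P (cball x r) \<le> 2*\<rho>*(2*r)^d" using pos_divide_less_eq[OF tp] by (auto intro!: bexI[of _ x])
  qed
qed



lemma net_exists:
  fixes M :: "'a::metric_space set" and P :: "'a measure"
  assumes P: "prob_space P" and Pb: "sets P = sets borel" and q: "q > 0" and m: "m > 0"
    and lo: "\<And>x. x \<in> M \<Longrightarrow> m \<le> measure P (cball x q)"
  shows "\<exists>F. F \<subseteq> M \<and> finite F \<and> real (card F) \<le> 1/m \<and> (\<forall>y\<in>M. \<exists>f\<in>F. dist y f \<le> 2*q)"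
proof -
  interpret P: prob_space P by fact
  define S where "S = (\<lambda>F. F \<subseteq> M \<and> finite F \<and> (\<forall>x\<in>F. \<forall>y\<in>F. x \<noteq> y \<longrightarrow> dist x y > 2*q))"
  have bound: "real (card F) \<le> 1/m" if "S F" for F
  proof -
    have F: "F \<subseteq> M" "finite F" "\<And>x y. x \<in> F \<Longrightarrow> y \<in> F \<Longrightarrow> x \<noteq> y \<Longrightarrow> dist x y > 2*q"
      using that unfolding S_def by auto
    have disj: "disjoint_family_on (\<lambda>f. cball f q) F"
      unfolding disjoint_family_on_def
    proof (intro ballI impI)
      fix x y assume xy: "x \<in> F" "y \<in> F" "x \<noteq> y"
      show "cball x q \<inter> cball y q = {}"
      proof (rule ccontr)
        assume "cball x q \<inter> cball y q \<noteq> {}"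
        then obtain z where "dist x z \<le> q" "dist y z \<le> q" by auto
        then have "dist x y \<le> 2*q" using dist_triangle2[of x y z] by linarith
        with F(3)[OF xy] show False by linarith
      qed
    qed
    have "real (card F) * m = (\<Sum>f\<in>F. m)" by simp
    also have "\<dots> \<le> (\<Sum>f\<in>F. measure P (cball f q))"
      using F lo by (intro sum_mono) auto
    also have "\<dots> = measure P (\<Union>f\<in>F. cball f q)"
      proof (rule measure_finite_Union[symmetric, OF F(2) _ disj])
      have cb: "\<And>f. cball f q \<in> sets P" unfolding Pb by (rule borel_closed) simp
      show "(\<lambda>f. cball f q) ` F \<subseteq> sets P" using cb by blast
    qed (simp add: P.emeasure_eq_measure)
    also have "\<dots> \<le> 1" by (rule P.prob_le_1)
    finally show ?thesis using m by (simp add: field_simps)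
  qed
  have "S {}" unfolding S_def by auto
  moreover have "\<forall>F. S F \<longrightarrow> card F < nat \<lfloor>1/m\<rfloor> + 1"
  proof (intro allI impI)
    fix F assume "S F"
    then have "real (card F) \<le> 1/m" by (rule bound)
    then have "card F \<le> nat \<lfloor>1/m\<rfloor>" by (rule le_nat_floor)
    then show "card F < nat \<lfloor>1/m\<rfloor> + 1" by simp
  qed
  ultimately obtain F where F: "S F" "\<And>G. S G \<Longrightarrow> card G \<le> card F"
    using Lattices_Big.ex_has_greatest_nat[of S "{}" card] by blast
  have cover: "\<exists>f\<in>F. dist y f \<le> 2*q" if "y \<in> M" for y
  proof (rule ccontr)
    assume "\<not> (\<exists>f\<in>F. dist y f \<le> 2*q)"
    then have far: "\<And>f. f \<in> F \<Longrightarrow> dist y f > 2*q" by force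
    then have yF: "y \<notin> F" using q by force
    have "S (insert y F)" using F(1) that far unfolding S_def by (auto simp: dist_commute)
    then have "card (insert y F) \<le> card F" by (rule F(2))
    moreover have "card (insert y F) = card F + 1" using yF F(1) unfolding S_def by simp
    ultimately show False by simp
  qed
  show ?thesis using F(1) bound[OF F(1)] cover unfolding S_def by blast
qed



lemma beta_lim:
  fixes b :: "nat \<Rightarrow> nat" and C D a :: real
  assumes b_rate: "(\<lambda>n. real (b n) * ln (real n) / real n) \<longlonglongrightarrow> 0"
    and a: "a \<noteq> 0"
  shows "(\<lambda>n. D / ln (real n) + (exp (-(ln (real n) - real (b n) * ln (real n) / real n))
            + C * (real (b n) * ln (real n) / real n)) / a) \<longlonglongrightarrow> 0"
proof -
  have lnt: "LIM n sequentially. ln (real n) :> at_top"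
    by (rule filterlim_compose[OF ln_at_top filterlim_real_sequentially])
  have t1: "(\<lambda>n. D / ln (real n)) \<longlonglongrightarrow> 0"
    by (rule tendsto_divide_0[OF tendsto_const filterlim_at_top_imp_at_infinity[OF lnt]])
  have "LIM n sequentially. (- (real (b n) * ln (real n) / real n)) + ln (real n) :> at_top"
    by (rule filterlim_tendsto_add_at_top[OF _ lnt]) (use tendsto_minus[OF b_rate] in simp)
  then have yt: "LIM n sequentially. ln (real n) - real (b n) * ln (real n) / real n :> at_top"
    by (simp add: algebra_simps)
  have "(\<lambda>n. inverse (exp (ln (real n) - real (b n) * ln (real n) / real n))) \<longlonglongrightarrow> 0"
    by (rule tendsto_inverse_0_at_top[OF filterlim_compose[OF exp_at_top yt]])
  then have t2: "(\<lambda>n. exp (-(ln (real n) - real (b n) * ln (real n) / real n))) \<longlonglongrightarrow> 0"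
    by (simp only: exp_minus)
  have "(\<lambda>n. (exp (-(ln (real n) - real (b n) * ln (real n) / real n))
            + C * (real (b n) * ln (real n) / real n)) / a) \<longlonglongrightarrow> (0 + C * 0) / a"
    by (intro tendsto_intros t2 b_rate a)
  then show ?thesis using tendsto_add[OF t1] by fastforce
qed



lemma markov_sets:
  fixes Q :: "'b measure" and G :: "'j \<Rightarrow> 'b set"
  assumes Q: "prob_space Q" and fin: "finite \<J>" and GS: "\<And>J. J \<in> \<J> \<Longrightarrow> G J \<in> sets Q"
    and N: "real (card \<J>) = N" "N > 0" and c: "0 < c"
    and dl: "\<And>J. J \<in> \<J> \<Longrightarrow> measure Q (space Q - G J) \<le> \<delta>"
  shows "{w\<in>space Q. c \<le> (1/N)*(\<Sum>J\<in>\<J>. if w\<in>G J then 0 else 1)} \<in> sets Q"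
    and "measure Q {w\<in>space Q. c \<le> (1/N)*(\<Sum>J\<in>\<J>. if w\<in>G J then 0 else 1)} \<le> \<delta> / c"
proof -
  interpret Q: prob_space Q by fact
  define g where "g w = (1/N) * (\<Sum>J\<in>\<J>. indicator (space Q - G J) w :: real)" for w
  have eqg: "(1/N)*(\<Sum>J\<in>\<J>. if w\<in>G J then 0 else 1) = g w" if "w \<in> space Q" for w
    unfolding g_def using that by (intro arg_cong[where f="\<lambda>x. (1/N) * x"] sum.cong) (auto simp: indicator_def)
  have eqs: "{w\<in>space Q. c \<le> (1/N)*(\<Sum>J\<in>\<J>. if w\<in>G J then 0 else 1)} = {w\<in>space Q. c \<le> g w}"
    using eqg by auto
  have Gc: "space Q - G J \<in> sets Q" if "J \<in> \<J>" for J using GS[OF that] by auto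
  have gm: "g \<in> borel_measurable Q"
    unfolding g_def using Gc by (intro borel_measurable_times borel_measurable_const borel_measurable_sum borel_measurable_indicator) auto
  show "{w\<in>space Q. c \<le> (1/N)*(\<Sum>J\<in>\<J>. if w\<in>G J then 0 else 1)} \<in> sets Q"
    unfolding eqs using gm by measurable
  have ii: "integrable Q (\<lambda>w. indicator (space Q - G J) w :: real)" if "J \<in> \<J>" for J
    by (intro integrable_real_indicator Gc[OF that]) (simp add: less_top[symmetric])
  have isum: "integrable Q (\<lambda>w. \<Sum>J\<in>\<J>. indicator (space Q - G J) w :: real)"
    using ii by (auto intro!: Bochner_Integration.integrable_sum)
  have ig: "integrable Q g"
    unfolding g_def by (rule integrable_mult_right[OF isum])
  have "measure Q {w\<in>space Q. c \<le> g w} \<le> (\<integral>w. g w \<partial>Q) / c"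
    by (rule integral_Markov_inequality_measure[OF ig _ _ c]) (use N in \<open>auto simp: g_def intro!: AE_I2 divide_nonneg_nonneg sum_nonneg\<close>)
  also have "(\<integral>w. g w \<partial>Q) = (1/N) * (\<Sum>J\<in>\<J>. measure Q (space Q - G J))"
  proof -
    have "(\<integral>w. g w \<partial>Q) = (1/N) * (\<integral>w. (\<Sum>J\<in>\<J>. indicator (space Q - G J) w :: real) \<partial>Q)"
      unfolding g_def by (rule integral_mult_right_zero)
    also have "(\<integral>w. (\<Sum>J\<in>\<J>. indicator (space Q - G J) w :: real) \<partial>Q) = (\<Sum>J\<in>\<J>. (\<integral>w. indicator (space Q - G J) w \<partial>Q))"
      using ii by (simp add: Bochner_Integration.integral_sum)
    also have "\<dots> = (\<Sum>J\<in>\<J>. measure Q (space Q - G J))"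
      by (intro sum.cong) (auto simp: Int_absorb2)
    finally show ?thesis .
  qed
  also have "\<dots> \<le> (1/N) * (\<Sum>J\<in>\<J>. \<delta>)"
    using N dl by (intro mult_left_mono sum_mono) auto
  also have "\<dots> = \<delta>" using N by simp
  finally show "measure Q {w\<in>space Q. c \<le> (1/N)*(\<Sum>J\<in>\<J>. if w\<in>G J then 0 else 1)} \<le> \<delta> / c"
    unfolding eqs using c by (simp add: divide_right_mono)
qed



lemma atom_lb:
  fixes P :: "'a::metric_space measure"
  assumes P: "prob_space P" and Pb: "sets P = sets borel" and t1: "t1 > 0"
    and lo: "\<And>r. 0 < r \<Longrightarrow> r < t1 \<Longrightarrow> c \<le> measure P (cball x r)"
  shows "c \<le> measure P {x}"
proof -
  interpret P: prob_space P by fact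
  define A where "A k = cball x (t1 / (real k + 2))" for k :: nat
  have As: "range A \<subseteq> sets P" unfolding A_def Pb by (auto intro: borel_closed)
  have fr: "t1 / (real n + 2) \<le> t1 / (real m + 2)" if "m \<le> n" for m n :: nat
    using that t1 by (intro divide_left_mono) auto
  have dec: "decseq A" unfolding A_def decseq_def
    using fr by (meson order.trans mem_cball subsetI)
  have int: "(\<Inter>k. A k) = {x}"
  proof (intro equalityI subsetI)
    fix y assume y: "y \<in> (\<Inter>k. A k)"
    show "y \<in> {x}"
    proof (rule ccontr)
      assume "y \<notin> {x}"
      then have dp: "dist x y > 0" by simp
      obtain k :: nat where k: "t1 / dist x y < real k" using reals_Archimedean2 by blast
      then have "t1 < real k * dist x y" using dp by (simp add: divide_less_eq)
      also have "\<dots> \<le> (real k + 2) * dist x y" using dp by (intro mult_right_mono) auto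
      finally have "t1 / (real k + 2) < dist x y" by (simp add: divide_less_eq mult.commute)
      moreover have "y \<in> A k" using y by auto
      ultimately show False unfolding A_def by simp
    qed
  next
    fix y assume "y \<in> {x}" then show "y \<in> (\<Inter>k. A k)" unfolding A_def using t1 by auto
  qed
  have lim: "(\<lambda>k. measure P (A k)) \<longlonglongrightarrow> measure P {x}"
    using P.finite_Lim_measure_decseq[OF As dec] int by simp
  have "\<forall>k\<ge>0. c \<le> measure P (A k)"
  proof (intro allI impI)
    fix k :: nat
    have "t1 / (real k + 2) < t1" using t1 by (simp add: divide_less_eq)
    moreover have "t1 / (real k + 2) > 0" using t1 by simp
    ultimately show "c \<le> measure P (A k)" unfolding A_def by (intro lo) auto
  qed
  then show ?thesis using LIMSEQ_le_const[OF lim] by blast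
qed

lemma finite_atoms:
  fixes P :: "'a::metric_space measure"
  assumes P: "prob_space P" and Pb: "sets P = sets borel" and c: "c > 0"
    and at: "\<And>x. x \<in> M \<Longrightarrow> c \<le> measure P {x}"
  shows "finite M"
proof -
  interpret P: prob_space P by fact
  have "finite M \<and> card M \<le> nat \<lfloor>1/c\<rfloor>"
  proof (rule finite_if_finite_subsets_card_bdd)
    fix G assume G: "G \<subseteq> M" "finite G"
    have "real (card G) * c = (\<Sum>x\<in>G. c)" by simp
    also have "\<dots> \<le> (\<Sum>x\<in>G. measure P {x})" using G at by (intro sum_mono) auto
    also have "\<dots> = measure P (\<Union>x\<in>G. {x})"
    proof (rule measure_finite_Union[symmetric, OF G(2)])
      show "(\<lambda>x. {x}) ` G \<subseteq> sets P" unfolding Pb by auto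
      show "disjoint_family_on (\<lambda>x. {x}) G" unfolding disjoint_family_on_def by auto
    qed (simp add: P.emeasure_eq_measure)
    also have "\<dots> \<le> 1" by (rule P.prob_le_1)
    finally have "real (card G) \<le> 1/c" using c by (simp add: field_simps)
    then show "card G \<le> nat \<lfloor>1/c\<rfloor>" by (rule le_nat_floor)
  qed
  then show ?thesis by blast
qed




lemma out_event:
  fixes M :: "'a::euclidean_space set" and n :: nat
  assumes P: "prob_space P" and Pb: "sets P = sets borel" and cl: "closed M" and PM0: "measure P (-M) = 0"
  shows "(\<Union>i\<in>{..<n}. {w\<in>space (PiM {..<n} (\<lambda>_. P)). w i \<in> -M}) \<in> sets (PiM {..<n} (\<lambda>_. P))"
    and "measure (PiM {..<n} (\<lambda>_. P)) (\<Union>i\<in>{..<n}. {w\<in>space (PiM {..<n} (\<lambda>_. P)). w i \<in> -M}) \<le> 0"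
proof -
  have B: "-M \<in> sets borel" using cl by (simp add: borel_closed)
  show "(\<Union>i\<in>{..<n}. {w\<in>space (PiM {..<n} (\<lambda>_. P)). w i \<in> -M}) \<in> sets (PiM {..<n} (\<lambda>_. P))"
    using ev_one_in(1)[OF P Pb _ B] by (intro sets.finite_UN) auto
  have "measure (PiM {..<n} (\<lambda>_. P)) (\<Union>i\<in>{..<n}. {w\<in>space (PiM {..<n} (\<lambda>_. P)). w i \<in> -M})
      \<le> (\<Sum>i\<in>{..<n}. measure (PiM {..<n} (\<lambda>_. P)) {w\<in>space (PiM {..<n} (\<lambda>_. P)). w i \<in> -M})"
    using ev_one_in(1)[OF P Pb _ B] by (intro measure_UNION_le) auto
  also have "\<dots> = 0" using ev_one_in(2)[OF P Pb _ B] PM0 by simp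
  finally show "measure (PiM {..<n} (\<lambda>_. P)) (\<Union>i\<in>{..<n}. {w\<in>space (PiM {..<n} (\<lambda>_. P)). w i \<in> -M}) \<le> 0" .
qed

lemma case_d0:
  fixes M :: "'a::euclidean_space set" and P :: "'a measure" and b :: "nat \<Rightarrow> nat"
  assumes P: "prob_space P" and Pb: "sets P = sets borel" and cl: "closed M" and Mne: "M \<noteq> {}"
    and PM0: "measure P (-M) = 0" and c: "c > 0" and at: "\<And>x. x \<in> M \<Longrightarrow> c \<le> measure P {x}"
    and alpha: "0 \<le> \<alpha>"
  shows "\<exists>\<beta>. \<beta> \<longlonglongrightarrow> 0 \<and> (\<forall>\<^sub>F n in sequentially.
           measure (PiM {..<n} (\<lambda>_. P))
             {w \<in> space (PiM {..<n} (\<lambda>_. P)).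
                hausdorff_dist (w ` {..<n}) M > subsample_c n (b n) \<alpha> w} \<le> \<beta> n)"
proof -
  interpret P: prob_space P by fact
  have finM: "finite M" by (rule finite_atoms[OF P Pb c at])
  obtain x0 where "x0 \<in> M" using Mne by blast
  then have c1: "c \<le> 1" using at[of x0] P.prob_le_1[of "{x0}"] by linarith
  define \<beta> where "\<beta> n = real (card M) * (1 - c) ^ n" for n
  have "\<beta> \<longlonglongrightarrow> real (card M) * 0" unfolding \<beta>_def
    by (intro tendsto_mult tendsto_const LIMSEQ_realpow_zero) (use c c1 in auto)
  then have lim: "\<beta> \<longlonglongrightarrow> 0" by simp
  have "\<forall>\<^sub>F n in sequentially. measure (PiM {..<n} (\<lambda>_. P))
             {w \<in> space (PiM {..<n} (\<lambda>_. P)).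
                hausdorff_dist (w ` {..<n}) M > subsample_c n (b n) \<alpha> w} \<le> \<beta> n"
    unfolding eventually_sequentially
  proof (intro exI[of _ 1] allI impI)
    fix n :: nat assume n1: "1 \<le> n"
    define Q where "Q = PiM {..<n} (\<lambda>_. P)"
    interpret Q: prob_space Q unfolding Q_def by (intro prob_space_PiM P)
    define Out where "Out = (\<Union>i\<in>{..<n}. {w\<in>space Q. w i \<in> -M})"
    define Miss where "Miss m = {w\<in>space Q. \<forall>i\<in>{..<n}. w i \<notin> {m}}" for m
    have Outs: "Out \<in> sets Q" and Out0: "measure Q Out \<le> 0"
      using out_event[OF P Pb cl PM0, of n] unfolding Out_def Q_def by auto
    have Misss: "Miss m \<in> sets Q" and Missm: "measure Q (Miss m) = (1 - measure P {m}) ^ n" for m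
      using ev_all_notin[OF P Pb, of "{..<n}" n "{m}"] unfolding Miss_def Q_def by auto
    have Us: "(\<Union>m\<in>M. Miss m) \<in> sets Q" using Misss finM by auto
    have sub: "{w \<in> space Q. hausdorff_dist (w ` {..<n}) M > subsample_c n (b n) \<alpha> w} \<subseteq> Out \<union> (\<Union>m\<in>M. Miss m)"
    proof
      fix w assume w: "w \<in> {w \<in> space Q. hausdorff_dist (w ` {..<n}) M > subsample_c n (b n) \<alpha> w}"
      show "w \<in> Out \<union> (\<Union>m\<in>M. Miss m)"
      proof (rule ccontr)
        assume nw: "w \<notin> Out \<union> (\<Union>m\<in>M. Miss m)"
        then have inM: "\<And>i. i < n \<Longrightarrow> w i \<in> M" using w unfolding Out_def by auto
        have hit: "\<And>m. m \<in> M \<Longrightarrow> \<exists>i<n. w i = m" using w nw unfolding Miss_def by auto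
        have "hausdorff_dist (w ` {..<n}) M \<le> 0"
        proof (rule hd_le)
          show "w ` {..<n} \<noteq> {}" using n1 by (auto simp: lessThan_empty_iff)
          show "w ` {..<n} \<subseteq> M" using inM by auto
          fix m assume "m \<in> M"
          then obtain i where "i < n" "w i = m" using hit by blast
          then show "\<exists>a\<in>w ` {..<n}. dist m a \<le> 0" by auto
        qed (use Mne in auto)
        moreover have "0 \<le> subsample_c n (b n) \<alpha> w" by (rule subsample_c_props(1)[OF alpha])
        ultimately show False using w by simp
      qed
    qed
    have "measure Q {w \<in> space Q. hausdorff_dist (w ` {..<n}) M > subsample_c n (b n) \<alpha> w}
        \<le> measure Q (Out \<union> (\<Union>m\<in>M. Miss m))"
      by (rule meas_le[OF _ _ sub]) (use Outs Us in \<open>auto intro: Q.finite_measure_axioms\<close>)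
    also have "\<dots> \<le> measure Q Out + measure Q (\<Union>m\<in>M. Miss m)"
      by (rule measure_Un_le[OF Outs Us])
    also have "\<dots> \<le> 0 + (\<Sum>m\<in>M. measure Q (Miss m))"
      using Out0 measure_UNION_le[OF finM Misss, of "\<lambda>m. m"] by auto
    also have "\<dots> \<le> 0 + (\<Sum>m\<in>M. (1 - c) ^ n)"
      unfolding Missm using at P.prob_le_1 by (intro add_left_mono sum_mono power_mono) auto
    also have "\<dots> = \<beta> n" unfolding \<beta>_def by simp
    finally show "measure (PiM {..<n} (\<lambda>_. P))
             {w \<in> space (PiM {..<n} (\<lambda>_. P)).
                hausdorff_dist (w ` {..<n}) M > subsample_c n (b n) \<alpha> w} \<le> \<beta> n"
      unfolding Q_def .
  qed
  with lim show ?thesis by blast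
qed



lemma pow_exp_bound:
  fixes x :: real assumes "0 \<le> x" "x \<le> 1"
  shows "(1 - x) ^ k \<le> exp (- (x * real k))"
proof -
  have "(1 - x) ^ k \<le> exp (-x) ^ k"
    using assms exp_ge_add_one_self[of "-x"] by (intro power_mono) auto
  also have "\<dots> = exp (- (x * real k))" by (simp add: exp_of_nat_mult[symmetric] mult.commute)
  finally show ?thesis .
qed

lemma case_dpos_n:
  fixes M :: "'a::euclidean_space set" and P :: "'a measure" and n :: nat and bn :: nat
  assumes P: "prob_space P" and Pb: "sets P = sets borel" and cl: "closed M" and Mne: "M \<noteq> {}"
    and PM0: "measure P (-M) = 0" and d: "d \<ge> 1" and rho: "\<rho> > 0" and t1: "t1 > 0"
    and lo: "\<And>r x. 0 < r \<Longrightarrow> r < t1 \<Longrightarrow> x \<in> M \<Longrightarrow> (\<rho>/2) * (2*r)^d \<le> measure P (cball x r)"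
    and hi: "\<And>r. 0 < r \<Longrightarrow> r < t1 \<Longrightarrow> \<exists>x\<in>M. measure P (cball x r) \<le> 2*\<rho>*(2*r)^d"
    and alpha: "0 < \<alpha>" "\<alpha> < 1"
    and n3: "3 \<le> n" and small: "(4^d*2/\<rho>) * (ln (real n) / real n) < t1^d"
    and b1: "1 \<le> bn" and bn: "bn \<le> n"
  shows "measure (PiM {..<n} (\<lambda>_. P))
             {w \<in> space (PiM {..<n} (\<lambda>_. P)).
                hausdorff_dist (w ` {..<n}) M > subsample_c n bn \<alpha> w}
         \<le> 2^d / ln (real n) + (exp (-(ln (real n) - real bn * ln (real n) / real n))
            + (4*4^d) * (real bn * ln (real n) / real n)) / (1 - \<alpha>)"
proof -
  interpret P: prob_space P by fact
  define mm where "mm = ln (real n) / real n"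
  define u where "u = (4^d*2/\<rho>) * mm"
  define R where "R = root d u / 2"
  have lnpos: "ln (real n) > 0" using n3 by simp
  have mmpos: "mm > 0" unfolding mm_def using lnpos n3 by simp
  have mm1: "mm \<le> 1" unfolding mm_def using ln_le_minus_one[of "real n"] n3 by simp
  have upos: "u > 0" unfolding u_def using mmpos rho by simp
  have dpos: "0 < d" using d by simp
  have Rpos: "R > 0" unfolding R_def using real_root_gt_zero[OF dpos upos] by simp
  have zR: "(2*R)^d = u" unfolding R_def using upos dpos by simp
  have Rt: "R < t1/2"
  proof -
    have "root d u < root d (t1^d)" by (rule real_root_less_mono[OF dpos]) (use small in \<open>simp add: u_def mm_def\<close>)
    also have "\<dots> = t1" using real_root_power_cancel[OF dpos] t1 by simp
    finally show ?thesis unfolding R_def by simp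
  qed
  have pw: "(2*(R/k))^d = u / k^d" for k :: real
  proof -
    have "(2*(R/k))^d = ((2*R)/k)^d" by (simp only: times_divide_eq_right)
    also have "\<dots> = (2*R)^d / k^d" by (rule power_divide)
    also have "\<dots> = u / k^d" by (simp only: zR)
    finally show ?thesis .
  qed
  have e8: "(8::real)^d = 2^d * 4^d" by (simp add: power_mult_distrib[symmetric])
  have e4: "(4::real)^d = 2^d * 2^d" by (simp add: power_mult_distrib[symmetric])
  have p2: "(2::real)^d \<ge> 1" by simp
  define m1 where "m1 = mm / 2^d"
  have m1pos: "m1 > 0" unfolding m1_def using mmpos by simp
  have c8: "(\<rho>/2) * (u / 8^d) = m1" unfolding m1_def u_def e8 using rho by (simp add: field_simps)
  have c4: "(\<rho>/2) * (u / 4^d) = mm" unfolding u_def using rho by (simp add: field_simps)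
  have c2: "(\<rho>/2) * (u / 2^d) = mm * 2^d" unfolding u_def e4 using rho by (simp add: field_simps)
  have c1: "2*\<rho>*u = (4*4^d) * mm" unfolding u_def using rho by (simp add: field_simps)
  have lo8: "m1 \<le> measure P (cball y (R/8))" if "y \<in> M" for y
  proof -
    have "(\<rho>/2) * (2*(R/8))^d \<le> measure P (cball y (R/8))" by (rule lo) (use Rpos Rt t1 that in auto)
    then show ?thesis unfolding pw c8 .
  qed
  have lo4: "mm \<le> measure P (cball y (R/4))" if "y \<in> M" for y
  proof -
    have "(\<rho>/2) * (2*(R/4))^d \<le> measure P (cball y (R/4))" by (rule lo) (use Rpos Rt t1 that in auto)
    then show ?thesis unfolding pw c4 .
  qed
  have lo2: "mm \<le> measure P (cball y (R/2))" if "y \<in> M" for y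
  proof -
    have "(\<rho>/2) * (2*(R/2))^d \<le> measure P (cball y (R/2))" by (rule lo) (use Rpos Rt t1 that in auto)
    then have "mm * 2^d \<le> measure P (cball y (R/2))" unfolding pw c2 .
    moreover have "mm \<le> mm * 2^d" using mmpos p2 by simp
    ultimately show ?thesis by linarith
  qed
  have "\<exists>x\<in>M. measure P (cball x R) \<le> 2*\<rho>*(2*R)^d" by (rule hi) (use Rpos Rt t1 in auto)
  then obtain x where xM: "x \<in> M" and hix: "measure P (cball x R) \<le> (4*4^d) * mm"
    unfolding zR c1 by blast
  have "\<exists>F. F \<subseteq> M \<and> finite F \<and> real (card F) \<le> 1/m1 \<and> (\<forall>y\<in>M. \<exists>f\<in>F. dist y f \<le> 2*(R/8))"
    by (rule net_exists[OF P Pb _ m1pos lo8]) (use Rpos in simp)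
  then obtain F where F: "F \<subseteq> M" "finite F" "real (card F) \<le> 1/m1" "\<And>y. y \<in> M \<Longrightarrow> \<exists>f\<in>F. dist y f \<le> R/4"
    by auto
  define Q where "Q = PiM {..<n} (\<lambda>_. P)"
  interpret Q: prob_space Q unfolding Q_def by (intro prob_space_PiM P)
  have Qfm: "finite_measure Q" by (rule Q.finite_measure_axioms)
  have cbB: "cball z r \<in> sets borel" for z :: 'a and r by (simp add: borel_closed)
  define Out where "Out = (\<Union>i\<in>{..<n}. {w\<in>space Q. w i \<in> -M})"
  have Outs: "Out \<in> sets Q" and Out0: "measure Q Out \<le> 0"
    using out_event[OF P Pb cl PM0, of n] unfolding Out_def Q_def by auto
  define Miss where "Miss f = {w\<in>space Q. \<forall>i\<in>{..<n}. w i \<notin> cball f (R/4)}" for f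
  have Misss: "Miss f \<in> sets Q" and Missm: "measure Q (Miss f) = (1 - measure P (cball f (R/4))) ^ n" for f
    using ev_all_notin[OF P Pb, of "{..<n}" n "cball f (R/4)"] cbB unfolding Miss_def Q_def by auto
  define NB where "NB = (\<Union>f\<in>F. Miss f)"
  have NBs: "NB \<in> sets Q" unfolding NB_def using Misss F(2) by auto
  have expn: "exp (- (mm * real n)) = 1 / real n"
    unfolding mm_def using n3 by (simp add: exp_minus inverse_eq_divide)
  have NBm: "measure Q NB \<le> 2^d / ln (real n)"
  proof -
    have "measure Q NB \<le> (\<Sum>f\<in>F. measure Q (Miss f))"
      unfolding NB_def by (rule measure_UNION_le[OF F(2) Misss])
    also have "\<dots> \<le> (\<Sum>f\<in>F. (1 - mm) ^ n)"
      unfolding Missm using lo4 F(1) P.prob_le_1 by (intro sum_mono power_mono) auto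
    also have "\<dots> = real (card F) * (1 - mm) ^ n" by simp
    also have "\<dots> \<le> (1/m1) * exp (- (mm * real n))"
      using F(3) pow_exp_bound[of mm n] mmpos mm1 m1pos by (intro mult_mono) auto
    also have "\<dots> = (1/m1) * (1 / real n)" by (simp only: expn)
    also have "\<dots> = 2^d / ln (real n)"
      unfolding m1_def mm_def using n3 lnpos by (simp add: field_simps)
    finally show ?thesis .
  qed
  define \<J> where "\<J> = {J. J \<subseteq> {..<n} \<and> card J = bn}"
  have finJ: "finite \<J>" unfolding \<J>_def by (rule finite_subset[of _ "Pow {..<n}"]) auto
  have cardJ: "real (card \<J>) = real (n choose bn)" unfolding \<J>_def using n_subsets[of "{..<n}" bn] by simp
  have Npos: "real (n choose bn) > 0" using bn by simp
  define A1 where "A1 J = {w\<in>space Q. \<forall>i\<in>{..<n} - J. w i \<notin> cball x (R/2)}" for J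
  define A2 where "A2 J = {w\<in>space Q. \<forall>j\<in>J. w j \<notin> cball x R}" for J
  define G where "G J = (space Q - A1 J) \<inter> A2 J" for J
  have A1s: "A1 J \<in> sets Q" and A1m: "measure Q (A1 J) = (1 - measure P (cball x (R/2))) ^ card ({..<n} - J)" for J
    using ev_all_notin[OF P Pb, of "{..<n} - J" n "cball x (R/2)"] cbB unfolding A1_def Q_def by auto
  have A2s: "A2 J \<in> sets Q" if "J \<subseteq> {..<n}" for J
    using ev_all_notin(1)[OF P Pb that cbB] unfolding A2_def Q_def by auto
  have Gs: "G J \<in> sets Q" if "J \<in> \<J>" for J
    using A1s A2s that unfolding G_def \<J>_def by auto
  define \<delta> where "\<delta> = exp (-(ln (real n) - real bn * ln (real n) / real n)) + (4*4^d) * (real bn * ln (real n) / real n)"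
  have Gm: "measure Q (space Q - G J) \<le> \<delta>" if "J \<in> \<J>" for J
  proof -
    have J: "J \<subseteq> {..<n}" "card J = bn" using that unfolding \<J>_def by auto
    have finJ': "finite J" using J(1) finite_subset by blast
    have eqc: "space Q - G J = A1 J \<union> (\<Union>j\<in>J. {w\<in>space Q. w j \<in> cball x R})"
      unfolding G_def A1_def A2_def by auto
    have B1: "(\<Union>j\<in>J. {w\<in>space Q. w j \<in> cball x R}) \<in> sets Q"
      using ev_one_in(1)[OF P Pb _ cbB] J(1) finJ' unfolding Q_def by (intro sets.finite_UN) auto
    have hB: "measure Q (\<Union>j\<in>J. {w\<in>space Q. w j \<in> cball x R}) \<le> (4*4^d) * (real bn * ln (real n) / real n)"
    proof -
      have "measure Q (\<Union>j\<in>J. {w\<in>space Q. w j \<in> cball x R}) \<le> (\<Sum>j\<in>J. measure Q {w\<in>space Q. w j \<in> cball x R})"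
        using ev_one_in(1)[OF P Pb _ cbB] J(1) finJ' unfolding Q_def by (intro measure_UNION_le) auto
      also have "\<dots> = (\<Sum>j\<in>J. measure P (cball x R))"
        using ev_one_in(2)[OF P Pb _ cbB] J(1) unfolding Q_def by (intro sum.cong) auto
      also have "\<dots> = real bn * measure P (cball x R)" using J(2) by simp
      also have "\<dots> \<le> real bn * ((4*4^d) * mm)" using hix by (intro mult_left_mono) auto
      also have "\<dots> = (4*4^d) * (real bn * ln (real n) / real n)" unfolding mm_def by simp
      finally show ?thesis .
    qed
    have cd: "card ({..<n} - J) = n - bn" using J by (simp add: card_Diff_subset finJ')
    have hA1: "measure Q (A1 J) \<le> exp (-(ln (real n) - real bn * ln (real n) / real n))"
    proof -
      have "measure Q (A1 J) = (1 - measure P (cball x (R/2))) ^ (n - bn)" using A1m[of J] cd by simp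
      also have "\<dots> \<le> (1 - mm) ^ (n - bn)"
        using lo2[OF xM] P.prob_le_1 by (intro power_mono) auto
      also have "\<dots> \<le> exp (- (mm * real (n - bn)))" by (rule pow_exp_bound) (use mmpos mm1 in auto)
      also have "mm * real (n - bn) = ln (real n) - real bn * ln (real n) / real n"
        unfolding mm_def using bn n3 by (simp add: of_nat_diff field_simps)
      finally show ?thesis .
    qed
    have "measure Q (space Q - G J) \<le> measure Q (A1 J) + measure Q (\<Union>j\<in>J. {w\<in>space Q. w j \<in> cball x R})"
      unfolding eqc by (rule measure_Un_le[OF A1s B1])
    then show ?thesis unfolding \<delta>_def using hA1 hB by linarith
  qed
  have c0: "0 < 1 - \<alpha>" using alpha by simp
  define LB where "LB = {w\<in>space Q. 1 - \<alpha> \<le> (1/real (n choose bn))*(\<Sum>J\<in>\<J>. if w\<in>G J then 0 else 1)}"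
  have LBs: "LB \<in> sets Q" and LBm: "measure Q LB \<le> \<delta> / (1 - \<alpha>)"
    using markov_sets[OF Q.prob_space_axioms finJ Gs cardJ Npos c0 Gm] unfolding LB_def by auto
  have sub: "{w \<in> space Q. hausdorff_dist (w ` {..<n}) M > subsample_c n bn \<alpha> w} \<subseteq> Out \<union> NB \<union> LB"
  proof
    fix w assume w: "w \<in> {w \<in> space Q. hausdorff_dist (w ` {..<n}) M > subsample_c n bn \<alpha> w}"
    show "w \<in> Out \<union> NB \<union> LB"
    proof (rule ccontr)
      assume nw: "w \<notin> Out \<union> NB \<union> LB"
      have ws: "w \<in> space Q" using w by auto
      have inM: "\<And>i. i < n \<Longrightarrow> w i \<in> M" using ws nw unfolding Out_def by auto
      have cov: "\<And>f. f \<in> F \<Longrightarrow> \<exists>i<n. dist f (w i) \<le> R/4" using ws nw unfolding NB_def Miss_def by auto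
      have T: "hausdorff_dist (w ` {..<n}) M \<le> R/2"
      proof (rule hd_le)
        show "w ` {..<n} \<noteq> {}" using n3 by (auto simp: lessThan_empty_iff)
        show "w ` {..<n} \<subseteq> M" using inM by auto
        fix y assume "y \<in> M"
        then obtain f where f: "f \<in> F" "dist y f \<le> R/4" using F(4) by blast
        then obtain i where i: "i < n" "dist f (w i) \<le> R/4" using cov by blast
        have "dist y (w i) \<le> R/2" using f(2) i(2) dist_triangle[of y "w i" f] by linarith
        then show "\<exists>a\<in>w ` {..<n}. dist y a \<le> R/2" using i(1) by auto
      qed (use Mne Rpos in auto)
      have gl: "(1/real (n choose bn))*(\<Sum>J\<in>\<J>. if w\<in>G J then 0 else 1) < 1 - \<alpha>"
        using ws nw unfolding LB_def by auto
      have Lge: "subsample_L n bn w (R/4) \<ge> 1 - (1 / real (n choose bn)) *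
           (\<Sum>J\<in>{J. J \<subseteq> {..<n} \<and> card J = bn}. if w \<in> G J then 0 else 1)"
      proof (rule subsample_L_ge[OF bn])
        fix J assume J: "J \<subseteq> {..<n}" "card J = bn" "w \<in> G J"
        then obtain i where i: "i \<in> {..<n} - J" "w i \<in> cball x (R/2)" unfolding G_def A1_def by auto
        have far: "\<And>j. j \<in> J \<Longrightarrow> w j \<notin> cball x R" using J(3) unfolding G_def A2_def by auto
        have finJ': "finite J" using J(1) finite_subset by blast
        have Jne: "J \<noteq> {}" using J(2) b1 by auto
        have "R/2 \<le> hausdorff_dist (w ` J) (w ` {..<n})"
        proof (rule hd_ge)
          show "w i \<in> w ` {..<n}" using i by auto
          fix a assume "a \<in> w ` J"
          then obtain j where j: "j \<in> J" "a = w j" by auto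
          have "dist x (w j) > R" using far[OF j(1)] by simp
          moreover have "dist x (w i) \<le> R/2" using i(2) by simp
          moreover have "dist x (w j) \<le> dist x (w i) + dist (w i) (w j)" by (rule dist_triangle)
          ultimately have "R/2 \<le> dist (w i) (w j)" by linarith
          then show "R/2 \<le> dist (w i) a" using j(2) by simp
        qed (use finJ' Jne in auto)
        then show "R/4 < hausdorff_dist (w ` J) (w ` {..<n})" using Rpos by linarith
      qed
      have "subsample_L n bn w (R/4) > \<alpha>" using Lge gl unfolding \<J>_def by linarith
      then have "2 * (R/4) \<le> subsample_c n bn \<alpha> w"
        using subsample_c_props(2)[of \<alpha> "R/4" n bn w] alpha Rpos by auto
      then show False using T w by simp
    qed
  qed
  have "measure Q {w \<in> space Q. hausdorff_dist (w ` {..<n}) M > subsample_c n bn \<alpha> w}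
      \<le> measure Q (Out \<union> NB \<union> LB)"
    by (rule meas_le[OF Qfm _ sub]) (use Outs NBs LBs in auto)
  also have "\<dots> \<le> measure Q (Out \<union> NB) + measure Q LB"
    by (rule measure_Un_le) (use Outs NBs LBs in auto)
  also have "\<dots> \<le> measure Q Out + measure Q NB + measure Q LB"
    using measure_Un_le[OF Outs NBs] by simp
  also have "\<dots> \<le> 0 + 2^d / ln (real n) + \<delta> / (1 - \<alpha>)"
    using Out0 NBm LBm by linarith
  finally show ?thesis unfolding Q_def \<delta>_def by simp
qed



lemma case_dpos:
  fixes M :: "'a::euclidean_space set" and P :: "'a measure" and b :: "nat \<Rightarrow> nat"
  assumes P: "prob_space P" and Pb: "sets P = sets borel" and cl: "closed M" and Mne: "M \<noteq> {}"
    and PM0: "measure P (-M) = 0" and d: "d \<ge> 1" and rho: "\<rho> > 0" and t1: "t1 > 0"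
    and lo: "\<And>r x. 0 < r \<Longrightarrow> r < t1 \<Longrightarrow> x \<in> M \<Longrightarrow> (\<rho>/2) * (2*r)^d \<le> measure P (cball x r)"
    and hi: "\<And>r. 0 < r \<Longrightarrow> r < t1 \<Longrightarrow> \<exists>x\<in>M. measure P (cball x r) \<le> 2*\<rho>*(2*r)^d"
    and alpha: "0 < \<alpha>" "\<alpha> < 1"
    and b_range: "\<forall>n\<ge>1. 1 \<le> b n \<and> b n \<le> n"
    and b_rate: "(\<lambda>n. real (b n) * ln (real n) / real n) \<longlonglongrightarrow> 0"
  shows "\<exists>\<beta>. \<beta> \<longlonglongrightarrow> 0 \<and> (\<forall>\<^sub>F n in sequentially.
           measure (PiM {..<n} (\<lambda>_. P))
             {w \<in> space (PiM {..<n} (\<lambda>_. P)).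
                hausdorff_dist (w ` {..<n}) M > subsample_c n (b n) \<alpha> w} \<le> \<beta> n)"
proof -
  define \<beta> where "\<beta> n = 2^d / ln (real n) + (exp (-(ln (real n) - real (b n) * ln (real n) / real n))
            + (4*4^d) * (real (b n) * ln (real n) / real n)) / (1 - \<alpha>)" for n
  have lim: "\<beta> \<longlonglongrightarrow> 0" unfolding \<beta>_def
    by (rule beta_lim[OF b_rate]) (use alpha in simp)
  have e1: "\<forall>\<^sub>F n in sequentially. 0 \<le> ln (real n) / real n"
    unfolding eventually_sequentially by (intro exI[of _ 1]) auto
  have e2: "\<forall>\<^sub>F n in sequentially. ln (real n) / real n \<le> real (b n) * ln (real n) / real n"
    unfolding eventually_sequentially
  proof (intro exI[of _ 1] allI impI)
    fix n :: nat assume "1 \<le> n"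
    then have "1 \<le> real (b n)" "0 \<le> ln (real n)" using b_range by auto
    then have "ln (real n) \<le> real (b n) * ln (real n)" by (metis mult_le_cancel_right1 mult.commute mult_right_mono mult_1)
    then show "ln (real n) / real n \<le> real (b n) * ln (real n) / real n" by (simp add: divide_right_mono)
  qed
  have lnlim: "(\<lambda>n. ln (real n) / real n) \<longlonglongrightarrow> 0"
    by (rule real_tendsto_sandwich[OF e1 e2 tendsto_const b_rate])
  have "(\<lambda>n. (4^d*2/\<rho>) * (ln (real n) / real n)) \<longlonglongrightarrow> (4^d*2/\<rho>) * 0"
    by (intro tendsto_mult tendsto_const lnlim)
  moreover have "t1^d > 0" using t1 by simp
  ultimately have e3: "\<forall>\<^sub>F n in sequentially. (4^d*2/\<rho>) * (ln (real n) / real n) < t1^d"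
    by (simp add: order_tendstoD(2))
  have e4: "\<forall>\<^sub>F n in sequentially. 3 \<le> n \<and> 1 \<le> b n \<and> b n \<le> n"
    unfolding eventually_sequentially using b_range by (intro exI[of _ 3]) auto
  have "\<forall>\<^sub>F n in sequentially.
           measure (PiM {..<n} (\<lambda>_. P))
             {w \<in> space (PiM {..<n} (\<lambda>_. P)).
                hausdorff_dist (w ` {..<n}) M > subsample_c n (b n) \<alpha> w} \<le> \<beta> n"
    using e3 e4
  proof eventually_elim
    case (elim n)
    show ?case unfolding \<beta>_def
      by (rule case_dpos_n[OF P Pb cl Mne PM0 d rho t1 lo hi alpha]) (use elim in auto)
  qed
  with lim show ?thesis by blast
qed

theorem mainTheorem3:
  fixes M :: "'a::euclidean_space set"
    and d :: nat
    and P :: "'a measure"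
    and \<rho> :: real
    and \<alpha> :: real
    and b :: "nat \<Rightarrow> nat"
  assumes M_compact: "compact M"
    and M_manifold: "smooth_submanifold d M"
    and M_reach: "positive_reach M"
    and P_prob: "prob_space P"
    and P_borel: "sets P = sets borel"
    and P_support: "support_of P = M"
    and rho_lim: "(rho_fun P d M \<longlongrightarrow> \<rho>) (at_right 0)"
    and rho_pos: "\<rho> > 0"
    and rho_diff: "\<exists>t0>0. \<exists>C2. \<forall>t\<in>{0..t0}. \<exists>D.
            ((\<lambda>s. if s = 0 then \<rho> else rho_fun P d M s) has_real_derivative D)
               (at t within {0..t0}) \<and> \<bar>D\<bar> \<le> C2"
    and alpha: "0 < \<alpha>" "\<alpha> < 1"
    and b_range: "\<forall>n\<ge>1. 1 \<le> b n \<and> b n \<le> n"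
    and b_inf: "filterlim b at_top sequentially"
    and b_rate: "(\<lambda>n. real (b n) * ln (real n) / real n) \<longlonglongrightarrow> 0"
  shows "\<exists>K. \<forall>\<^sub>F n in sequentially.
           measure (PiM {..<n} (\<lambda>_. P))
             {w \<in> space (PiM {..<n} (\<lambda>_. P)).
                hausdorff_dist (w ` {..<n}) M > subsample_c n (b n) \<alpha> w}
           \<le> \<alpha> + K * (real (b n) / real n) powr (1/4)"
proof -
  have cl: "closed M" using M_compact by (rule compact_imp_closed)
  have PM0: "measure P (-M) = 0" and Mne: "M \<noteq> {}"
    using support_full[OF P_prob P_borel P_support cl] by auto
  obtain t1 where t1: "t1 > 0" and tb: "\<And>r. 0 < r \<Longrightarrow> r < t1 \<Longrightarrow>
     (\<forall>x\<in>M. (\<rho>/2) * (2*r)^d \<le> measure P (cball x r)) \<and> (\<exists>x\<in>M. measure P (cball x r) \<le> 2*\<rho>*(2*r)^d)"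
    using rho_bounds[OF rho_lim rho_pos Mne] by blast
  have ex: "\<exists>\<beta>. \<beta> \<longlonglongrightarrow> 0 \<and> (\<forall>\<^sub>F n in sequentially.
           measure (PiM {..<n} (\<lambda>_. P))
             {w \<in> space (PiM {..<n} (\<lambda>_. P)).
                hausdorff_dist (w ` {..<n}) M > subsample_c n (b n) \<alpha> w} \<le> \<beta> n)"
  proof (cases "d = 0")
    case True
    have at: "\<rho>/2 \<le> measure P {x}" if "x \<in> M" for x
      by (rule atom_lb[OF P_prob P_borel t1]) (use tb that True in auto)
    show ?thesis
      by (rule case_d0[OF P_prob P_borel cl Mne PM0 _ at]) (use rho_pos alpha in auto)
  next
    case False
    have d1: "d \<ge> 1" using False by simp
    have lo: "\<And>r x. 0 < r \<Longrightarrow> r < t1 \<Longrightarrow> x \<in> M \<Longrightarrow> (\<rho>/2) * (2*r)^d \<le> measure P (cball x r)"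
      using tb by blast
    have hi: "\<And>r. 0 < r \<Longrightarrow> r < t1 \<Longrightarrow> \<exists>x\<in>M. measure P (cball x r) \<le> 2*\<rho>*(2*r)^d"
      using tb by blast
    show ?thesis
      by (rule case_dpos[OF P_prob P_borel cl Mne PM0 d1 rho_pos t1 lo hi alpha b_range b_rate])
  qed
  then obtain \<beta> where \<beta>: "\<beta> \<longlonglongrightarrow> 0" and evb: "\<forall>\<^sub>F n in sequentially.
           measure (PiM {..<n} (\<lambda>_. P))
             {w \<in> space (PiM {..<n} (\<lambda>_. P)).
                hausdorff_dist (w ` {..<n}) M > subsample_c n (b n) \<alpha> w} \<le> \<beta> n" by blast
  have "\<forall>\<^sub>F n in sequentially. \<beta> n < \<alpha>" using order_tendstoD(2)[OF \<beta>] alpha by simp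
  with evb have "\<forall>\<^sub>F n in sequentially.
           measure (PiM {..<n} (\<lambda>_. P))
             {w \<in> space (PiM {..<n} (\<lambda>_. P)).
                hausdorff_dist (w ` {..<n}) M > subsample_c n (b n) \<alpha> w}
           \<le> \<alpha> + 0 * (real (b n) / real n) powr (1/4)"
    by eventually_elim simp
  then show ?thesis by blast
qed


end
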